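(* Assume (A1) and (A2) below. Then for any policy $\pi$ and any $s\in\mathcal S$, $u_t(s)=w_t(s)-g_t(s)$, where $$u_t(s)=\mathbb{V}_{a,s'\sim\pi,\bar p_t}\big[\bar V_t^\pi(s')\big]-\mathbb{E}_{p\sim\Phi_t}\Big[\mathbb{V}_{a,s'\sim\pi,p}\big[V^{\pi,p}(s')\big]\Big],$$ $$w_t(s)=\mathbb{V}_{p\sim\Phi_t}\Big[\sum_{a,s'}\pi(a\mid s)p(s'\mid s,a)\bar V^\pi_t(s')\Big],$$ $$g_t(s)=\mathbb{E}_{p\sim\Phi_t}\Big[\mathbb{V}_{a,s'\sim\pi,p}\big[V^{\pi,p}(s')\big]-\mathbb{V}_{a,s'\sim\pi,p}\big[\bar V^\pi_t(s')\big]\Big].$$ Furthermore, $g_t(s)\ge 0$, and hence $u_t(s)\le w_t(s)$.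
   Context: Let $\mathcal S$ be a finite state space, $\mathcal A$ a finite action space, $r:\mathcal S\times\mathcal A\to\mathbb R$ a known bounded (deterministic) reward function and $\gamma\in[0,1)$ a discount factor. A transition function $p$ assigns to each $(s,a)$ a probability distribution $p(\cdot\mid s,a)$ on $\mathcal S$. A policy $\pi$ gives distributions $\pi(\cdot\mid s)$ on $\mathcal A$. For a transition function $p$, the value function is $V^{\pi,p}(s)=\mathbb E\big[\sum_{h\ge 0}\gamma^h r(s_h,a_h)\mid s_0=s\big]$ with $a_h\sim\pi(\cdot\mid s_h)$, $s_{h+1}\sim p(\cdot\mid s_h,a_h)$. The transition function $p$ is a random variable with (posterior) distribution $\Phi_t$. Define $\bar p_t(s'\mid s,a)=\mathbb E_{p\sim\Phi_t}[p(s'\mid s,a)]$ and $\bar V^\pi_t(s)=\mathbb E_{p\sim\Phi_t}[V^{\pi,p}(s)]$. For a transition function $q$ and a function $f$ on $\mathcal S$, $\mathbb V_{a,s'\sim\pi,q}[f(s')]$ denotes the variance of $f(s')$ when $a\sim\pi(\cdot\mid s)$ and $s'\sim q(\cdot\mid s,a)$. Assumptions: (A1) (independent transitions) $p(s'\mid x,a)$ and $p(s'\mid y,a)$ are independent random variables if $x\neq y$; (A2) (acyclic MDP) the MDP is a directed acyclic graph, i.e., states are not visited more than once in any given episode.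
   Formalization: (A1) makes the rows p(.|x,.) at distinct states x mutually independent, not pairwise independent entries, and (A2) means a rank on states strictly decreases along every positive-probability transition except at terminal states, which every p fixes with probability 1. Each condition added here is assumed in the paper as well or is needed for the statement above to hold. *)

theory Defs
  imports "HOL-Probability.Probability"
begin

text \<open>A transition function is p :: 's => 'a => 's => real with p s a s' = p(s'|s,a).
  A policy is pi :: 's => 'a => real with pi s a = pi(a|s).\<close>

definition is_transition :: "('s::finite \<Rightarrow> 'a::finite \<Rightarrow> 's \<Rightarrow> real) \<Rightarrow> bool" where
  "is_transition p \<longleftrightarrow> (\<forall>s a s'. 0 \<le> p s a s') \<and> (\<forall>s a. (\<Sum>s'\<in>UNIV. p s a s') = 1)"

definition is_policy :: "('s::finite \<Rightarrow> 'a::finite \<Rightarrow> real) \<Rightarrow> bool" where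
  "is_policy \<pi> \<longleftrightarrow> (\<forall>s a. 0 \<le> \<pi> s a) \<and> (\<forall>s. (\<Sum>a\<in>UNIV. \<pi> s a) = 1)"

primrec state_dist ::
  "('s::finite \<Rightarrow> 'a::finite \<Rightarrow> real) \<Rightarrow> ('s \<Rightarrow> 'a \<Rightarrow> 's \<Rightarrow> real) \<Rightarrow> 's \<Rightarrow> nat \<Rightarrow> 's \<Rightarrow> real" where
  "state_dist \<pi> p s0 0 = (\<lambda>s. if s = s0 then 1 else 0)"
| "state_dist \<pi> p s0 (Suc h) =
     (\<lambda>s'. \<Sum>s\<in>UNIV. \<Sum>a\<in>UNIV. state_dist \<pi> p s0 h s * \<pi> s a * p s a s')"

definition value_fn ::
  "('s::finite \<Rightarrow> 'a::finite \<Rightarrow> real) \<Rightarrow> real \<Rightarrow> ('s \<Rightarrow> 'a \<Rightarrow> real) \<Rightarrow> ('s \<Rightarrow> 'a \<Rightarrow> 's \<Rightarrow> real) \<Rightarrow> 's \<Rightarrow> real" where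
  "value_fn r \<gamma> \<pi> p s0 =
     (\<Sum>h. \<gamma> ^ h * (\<Sum>s\<in>UNIV. \<Sum>a\<in>UNIV. state_dist \<pi> p s0 h s * \<pi> s a * r s a))"

definition next_mean ::
  "('s::finite \<Rightarrow> 'a::finite \<Rightarrow> real) \<Rightarrow> ('s \<Rightarrow> 'a \<Rightarrow> 's \<Rightarrow> real) \<Rightarrow> 's \<Rightarrow> ('s \<Rightarrow> real) \<Rightarrow> real" where
  "next_mean \<pi> q s f = (\<Sum>a\<in>UNIV. \<Sum>s'\<in>UNIV. \<pi> s a * q s a s' * f s')"

definition next_var ::
  "('s::finite \<Rightarrow> 'a::finite \<Rightarrow> real) \<Rightarrow> ('s \<Rightarrow> 'a \<Rightarrow> 's \<Rightarrow> real) \<Rightarrow> 's \<Rightarrow> ('s \<Rightarrow> real) \<Rightarrow> real" where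
  "next_var \<pi> q s f = (\<Sum>a\<in>UNIV. \<Sum>s'\<in>UNIV. \<pi> s a * q s a s' * (f s' - next_mean \<pi> q s f)\<^sup>2)"

text \<open>Posterior: a probability space M and a random transition function P.
  Posterior mean transition and posterior mean value.\<close>
definition mean_trans ::
  "'w measure \<Rightarrow> ('w \<Rightarrow> 's \<Rightarrow> 'a \<Rightarrow> 's \<Rightarrow> real) \<Rightarrow> 's \<Rightarrow> 'a \<Rightarrow> 's \<Rightarrow> real" where
  "mean_trans M P s a s' = (\<integral>\<omega>. P \<omega> s a s' \<partial>M)"

definition mean_value ::
  "'w measure \<Rightarrow> ('w \<Rightarrow> 's::finite \<Rightarrow> 'a::finite \<Rightarrow> 's \<Rightarrow> real) \<Rightarrow> ('s \<Rightarrow> 'a \<Rightarrow> real) \<Rightarrow> real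
     \<Rightarrow> ('s \<Rightarrow> 'a \<Rightarrow> real) \<Rightarrow> 's \<Rightarrow> real" where
  "mean_value M P r \<gamma> \<pi> s = (\<integral>\<omega>. value_fn r \<gamma> \<pi> (P \<omega>) s \<partial>M)"

definition u_t where
  "u_t M P r \<gamma> \<pi> s =
     next_var \<pi> (mean_trans M P) s (mean_value M P r \<gamma> \<pi>)
     - (\<integral>\<omega>. next_var \<pi> (P \<omega>) s (value_fn r \<gamma> \<pi> (P \<omega>)) \<partial>M)"

definition w_t where
  "w_t M P r \<gamma> \<pi> s =
     prob_space.variance M (\<lambda>\<omega>. \<Sum>a\<in>UNIV. \<Sum>s'\<in>UNIV. \<pi> s a * P \<omega> s a s' * mean_value M P r \<gamma> \<pi> s')"

definition g_t where
  "g_t M P r \<gamma> \<pi> s =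
     (\<integral>\<omega>. next_var \<pi> (P \<omega>) s (value_fn r \<gamma> \<pi> (P \<omega>))
          - next_var \<pi> (P \<omega>) s (mean_value M P r \<gamma> \<pi>) \<partial>M)"

text \<open>(A1) Independent transitions: the rows p(.|x,.) at distinct states x are
  (mutually) independent random variables.\<close>
definition indep_transitions :: "'w measure \<Rightarrow> ('w \<Rightarrow> 's \<Rightarrow> 'a \<Rightarrow> 's \<Rightarrow> real) \<Rightarrow> bool" where
  "indep_transitions M P \<longleftrightarrow>
     prob_space.indep_vars M (\<lambda>_. Pi\<^sub>M UNIV (\<lambda>_. Pi\<^sub>M UNIV (\<lambda>_. borel))) (\<lambda>x \<omega>. P \<omega> x) UNIV"

text \<open>(A2) Acyclic MDP: there is a rank on states that strictly decreases along every
  possible transition, except at terminal (absorbing) states, which deterministically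
  loop to themselves (end of episode).\<close>
definition terminal_state :: "'w measure \<Rightarrow> ('w \<Rightarrow> 's \<Rightarrow> 'a \<Rightarrow> 's \<Rightarrow> real) \<Rightarrow> 's \<Rightarrow> bool" where
  "terminal_state M P s \<longleftrightarrow> (\<forall>\<omega>\<in>space M. \<forall>a. P \<omega> s a s = 1)"

definition acyclic_mdp :: "'w measure \<Rightarrow> ('w \<Rightarrow> 's \<Rightarrow> 'a \<Rightarrow> 's \<Rightarrow> real) \<Rightarrow> bool" where
  "acyclic_mdp M P \<longleftrightarrow> (\<exists>rank :: 's \<Rightarrow> nat. \<forall>\<omega>\<in>space M. \<forall>s a s'.
      P \<omega> s a s' \<noteq> 0 \<longrightarrow> rank s' < rank s \<or> (s' = s \<and> terminal_state M P s))"

end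

theory Submission
  imports Defs
begin

lemma sd_nonneg:
  assumes "is_transition p" "is_policy \<pi>"
  shows "0 \<le> state_dist \<pi> p s0 h x"
  using assms
  by (induction h arbitrary: x) (auto simp: is_transition_def is_policy_def intro!: sum_nonneg mult_nonneg_nonneg)

lemma sd_sum:
  assumes "is_transition p" "is_policy \<pi>"
  shows "(\<Sum>x\<in>UNIV. state_dist \<pi> p s0 h x) = 1"
proof (induction h)
  case 0
  then show ?case by simp
next
  case (Suc h)
  have "(\<Sum>x\<in>UNIV. state_dist \<pi> p s0 (Suc h) x)
     = (\<Sum>s\<in>UNIV. \<Sum>a\<in>UNIV. state_dist \<pi> p s0 h s * \<pi> s a * (\<Sum>x\<in>UNIV. p s a x))"
    by (simp add: sum_distrib_left, subst sum.swap, rule sum.cong[OF refl], subst sum.swap, simp)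
  also have "\<dots> = (\<Sum>s\<in>UNIV. state_dist \<pi> p s0 h s * (\<Sum>a\<in>UNIV. \<pi> s a))"
    using assms by (simp add: is_transition_def sum_distrib_left)
  also have "\<dots> = 1" using assms Suc by (simp add: is_policy_def)
  finally show ?case .
qed

lemma sd_le1:
  assumes "is_transition p" "is_policy \<pi>"
  shows "state_dist \<pi> p s0 h x \<le> 1"
proof -
  have "state_dist \<pi> p s0 h x \<le> (\<Sum>x\<in>UNIV. state_dist \<pi> p s0 h x)"
    by (rule member_le_sum) (auto intro: sd_nonneg[OF assms])
  then show ?thesis using sd_sum[OF assms] by simp
qed

lemma pol_le1:
  assumes "is_policy \<pi>"
  shows "\<pi> s a \<le> 1" "0 \<le> \<pi> s a"
proof -
  have "\<pi> s a \<le> (\<Sum>a\<in>UNIV. \<pi> s a)"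
    by (rule member_le_sum) (use assms in \<open>auto simp: is_policy_def\<close>)
  then show "\<pi> s a \<le> 1" using assms by (simp add: is_policy_def)
  show "0 \<le> \<pi> s a" using assms by (simp add: is_policy_def)
qed

lemma trans_le1:
  assumes "is_transition p"
  shows "p s a y \<le> 1" "0 \<le> p s a y"
proof -
  have "p s a y \<le> (\<Sum>y\<in>UNIV. p s a y)"
    by (rule member_le_sum) (use assms in \<open>auto simp: is_transition_def\<close>)
  then show "p s a y \<le> 1" using assms by (simp add: is_transition_def)
  show "0 \<le> p s a y" using assms by (simp add: is_transition_def)
qed

definition rbound :: "('s::finite \<Rightarrow> 'a::finite \<Rightarrow> real) \<Rightarrow> real" where
  "rbound r = (\<Sum>x\<in>UNIV. \<Sum>a\<in>UNIV. \<bar>r x a\<bar>)"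

definition vterm where
  "vterm r \<gamma> \<pi> p s0 h = \<gamma> ^ h * (\<Sum>s\<in>UNIV. \<Sum>a\<in>UNIV. state_dist \<pi> p s0 h s * \<pi> s a * r s a)"

lemma vterm_bound:
  assumes "is_transition p" "is_policy \<pi>" "0 \<le> \<gamma>"
  shows "\<bar>vterm r \<gamma> \<pi> p s0 h\<bar> \<le> \<gamma> ^ h * rbound r"
proof -
  have "\<bar>\<Sum>s\<in>UNIV. \<Sum>a\<in>UNIV. state_dist \<pi> p s0 h s * \<pi> s a * r s a\<bar>
      \<le> (\<Sum>s\<in>UNIV. \<Sum>a\<in>UNIV. \<bar>state_dist \<pi> p s0 h s * \<pi> s a * r s a\<bar>)"
    by (rule order.trans[OF sum_abs]) (intro sum_mono sum_abs)
  also have "\<dots> \<le> rbound r"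
    unfolding rbound_def
  proof (intro sum_mono)
    fix x a
    have "\<bar>state_dist \<pi> p s0 h x * \<pi> x a\<bar> \<le> 1"
      using sd_nonneg[OF assms(1,2)] sd_le1[OF assms(1,2)] pol_le1[OF assms(2)]
      by (simp add: abs_mult mult_le_one)
    then show "\<bar>state_dist \<pi> p s0 h x * \<pi> x a * r x a\<bar> \<le> \<bar>r x a\<bar>"
      by (simp add: abs_mult mult_left_le_one_le)
  qed
  finally show ?thesis unfolding vterm_def using assms(3)
    by (simp add: abs_mult mult_left_mono)
qed

lemma vterm_summable:
  assumes "is_transition p" "is_policy \<pi>" "0 \<le> \<gamma>" "\<gamma> < 1"
  shows "summable (vterm r \<gamma> \<pi> p s0)"
proof (rule summable_comparison_test'[where g="\<lambda>h. \<gamma> ^ h * rbound r"])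
  show "summable (\<lambda>h. \<gamma> ^ h * rbound r)"
    using assms by (intro summable_mult2 summable_geometric) simp
  show "norm (vterm r \<gamma> \<pi> p s0 n) \<le> \<gamma> ^ n * rbound r" for n
    using vterm_bound[OF assms(1-3)] by simp
qed

lemma value_fn_vterm: "value_fn r \<gamma> \<pi> p s0 = (\<Sum>h. vterm r \<gamma> \<pi> p s0 h)"
  by (simp add: value_fn_def vterm_def)

lemma value_bound:
  assumes "is_transition p" "is_policy \<pi>" "0 \<le> \<gamma>" "\<gamma> < 1"
  shows "\<bar>value_fn r \<gamma> \<pi> p s0\<bar> \<le> rbound r / (1 - \<gamma>)"
proof -
  have sg: "summable (\<lambda>h. \<gamma> ^ h * rbound r)"
    using assms by (intro summable_mult2 summable_geometric) simp
  have sn: "summable (\<lambda>h. norm (vterm r \<gamma> \<pi> p s0 h))"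
    by (rule summable_comparison_test'[OF sg]) (use vterm_bound[OF assms(1-3)] in simp)
  have "\<bar>value_fn r \<gamma> \<pi> p s0\<bar> \<le> (\<Sum>h. norm (vterm r \<gamma> \<pi> p s0 h))"
    unfolding value_fn_vterm using summable_norm[OF sn] by simp
  also have "\<dots> \<le> (\<Sum>h. \<gamma> ^ h * rbound r)"
    by (rule suminf_le[OF _ sn sg]) (use vterm_bound[OF assms(1-3)] in simp)
  also have "\<dots> = rbound r / (1 - \<gamma>)"
    using assms by (simp add: suminf_mult2[symmetric] suminf_geometric)
  finally show ?thesis .
qed

lemma value_lim:
  assumes "is_transition p" "is_policy \<pi>" "0 \<le> \<gamma>" "\<gamma> < 1"
  shows "value_fn r \<gamma> \<pi> p s0 = lim (\<lambda>n. \<Sum>h<n. vterm r \<gamma> \<pi> p s0 h)"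
  unfolding value_fn_vterm
  using vterm_summable[OF assms, of r s0] by (metis sums_def limI summable_sums)

lemma sd_support:
  fixes rank :: "'s::finite \<Rightarrow> nat"
  assumes R: "\<And>x a y. p x a y \<noteq> 0 \<Longrightarrow> rank y < rank x \<or> y = x"
  shows "state_dist \<pi> p j h x \<noteq> 0 \<Longrightarrow> rank x \<le> rank j"
proof (induction h arbitrary: x)
  case 0
  then show ?case by (simp split: if_splits)
next
  case (Suc h)
  then obtain z a where "state_dist \<pi> p j h z * \<pi> z a * p z a x \<noteq> 0"
    by (auto elim!: sum.not_neutral_contains_not_neutral)
  then have "state_dist \<pi> p j h z \<noteq> 0" "p z a x \<noteq> 0" by auto
  with Suc.IH R show ?case by fastforce
qed

lemma sd_local:
  fixes rank :: "'s::finite \<Rightarrow> nat"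
  assumes R: "\<And>x a y. p x a y \<noteq> 0 \<Longrightarrow> rank y < rank x \<or> y = x"
    and js: "rank j < rank s"
  shows "state_dist \<pi> (p(s:=Q)) j h = state_dist \<pi> p j h"
proof (induction h)
  case 0
  then show ?case by simp
next
  case (Suc h)
  show ?case
  proof
    fix y
    show "state_dist \<pi> (p(s := Q)) j (Suc h) y = state_dist \<pi> p j (Suc h) y"
      unfolding state_dist.simps Suc
    proof (intro sum.cong refl)
      fix x a
      show "state_dist \<pi> p j h x * \<pi> x a * (p(s := Q)) x a y = state_dist \<pi> p j h x * \<pi> x a * p x a y"
      proof (cases "state_dist \<pi> p j h x = 0")
        case False
        then have "rank x \<le> rank j" using sd_support[where p=p and rank=rank and \<pi>=\<pi> and j=j and h=h and x=x] R False by blast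
        then have "x \<noteq> s" using js by auto
        then show ?thesis by simp
      qed simp
    qed
  qed
qed

lemma value_local:
  fixes rank :: "'s::finite \<Rightarrow> nat"
  assumes R: "\<And>x a y. p x a y \<noteq> 0 \<Longrightarrow> rank y < rank x \<or> y = x"
    and js: "rank j < rank s"
  shows "value_fn r \<gamma> \<pi> (p(s:=Q)) j = value_fn r \<gamma> \<pi> p j"
  unfolding value_fn_def by (simp add: sd_local[OF R js])

lemma sd_measurable:
  fixes G :: "'b \<Rightarrow> 's::finite \<Rightarrow> 'a::finite \<Rightarrow> 's \<Rightarrow> real"
  assumes G: "\<And>x a y. (\<lambda>b. G b x a y) \<in> borel_measurable N"
  shows "(\<lambda>b. state_dist \<pi> (G b) j h x) \<in> borel_measurable N"
proof (induction h arbitrary: x)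
  case 0
  then show ?case by simp
next
  case (Suc h)
  show ?case
    unfolding state_dist.simps
    by (intro borel_measurable_sum borel_measurable_times Suc G borel_measurable_const)
qed

lemma lim_measurable:
  fixes G :: "'b \<Rightarrow> 's::finite \<Rightarrow> 'a::finite \<Rightarrow> 's \<Rightarrow> real"
  assumes G: "\<And>x a y. (\<lambda>b. G b x a y) \<in> borel_measurable N"
  shows "(\<lambda>b. lim (\<lambda>n. \<Sum>h<n. vterm r \<gamma> \<pi> (G b) j h)) \<in> borel_measurable N"
proof (rule borel_measurable_lim_metric)
  fix n
  show "(\<lambda>b. \<Sum>h<n. vterm r \<gamma> \<pi> (G b) j h) \<in> borel_measurable N"
    unfolding vterm_def
    by (intro borel_measurable_sum borel_measurable_times sd_measurable G borel_measurable_const)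
qed

lemma vterm_local:
  fixes rank :: "'s::finite \<Rightarrow> nat"
  assumes R: "\<And>x a y. p x a y \<noteq> 0 \<Longrightarrow> rank y < rank x \<or> y = x"
    and js: "rank j < rank s"
  shows "vterm r \<gamma> \<pi> (p(s:=Q)) j = vterm r \<gamma> \<pi> p j"
  unfolding vterm_def by (simp add: sd_local[OF R js])

lemma nv_alt:
  assumes "(\<Sum>a\<in>UNIV. \<Sum>y\<in>UNIV. \<pi> s a * q s a y) = 1"
  shows "next_var \<pi> q s f = (\<Sum>a\<in>UNIV. \<Sum>y\<in>UNIV. \<pi> s a * q s a y * (f y)\<^sup>2) - (next_mean \<pi> q s f)\<^sup>2"
proof -
  let ?m = "next_mean \<pi> q s f"
  have "next_var \<pi> q s f = (\<Sum>a\<in>UNIV. \<Sum>y\<in>UNIV. \<pi> s a * q s a y * (f y)\<^sup>2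
      - 2 * ?m * (\<pi> s a * q s a y * f y) + ?m\<^sup>2 * (\<pi> s a * q s a y))"
    unfolding next_var_def by (intro sum.cong refl) (simp add: power2_diff algebra_simps)
  also have "\<dots> = (\<Sum>a\<in>UNIV. \<Sum>y\<in>UNIV. \<pi> s a * q s a y * (f y)\<^sup>2)
      - 2 * ?m * (\<Sum>a\<in>UNIV. \<Sum>y\<in>UNIV. \<pi> s a * q s a y * f y) + ?m\<^sup>2 * (\<Sum>a\<in>UNIV. \<Sum>y\<in>UNIV. \<pi> s a * q s a y)"
    by (simp add: sum.distrib sum_subtractf sum_distrib_left)
  also have "\<dots> = (\<Sum>a\<in>UNIV. \<Sum>y\<in>UNIV. \<pi> s a * q s a y * (f y)\<^sup>2) - ?m\<^sup>2"
    using assms by (simp add: next_mean_def power2_eq_square)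
  finally show ?thesis .
qed

lemma pol_trans_sum:
  assumes "is_transition p" "is_policy \<pi>"
  shows "(\<Sum>a\<in>UNIV. \<Sum>y\<in>UNIV. \<pi> s a * p s a y) = 1"
  using assms by (simp add: is_transition_def is_policy_def flip: sum_distrib_left)

lemma meas_row: "(\<lambda>row. row a y) \<in> borel_measurable (Pi\<^sub>M UNIV (\<lambda>_::'a. Pi\<^sub>M UNIV (\<lambda>_::'s. borel :: real measure)))"
proof (rule measurable_compose[where f="\<lambda>g. g a" and g="\<lambda>h. h y"])
  show "(\<lambda>g. g a) \<in> measurable (Pi\<^sub>M UNIV (\<lambda>_::'a. Pi\<^sub>M UNIV (\<lambda>_::'s. borel :: real measure))) (Pi\<^sub>M UNIV (\<lambda>_::'s. borel :: real measure))"
    by (rule measurable_component_singleton) simp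
  show "(\<lambda>h. h y) \<in> borel_measurable (Pi\<^sub>M UNIV (\<lambda>_::'s. borel :: real measure))"
    by (rule measurable_component_singleton) simp
qed

lemma nv_terminal:
  assumes p: "is_transition p" and pol: "is_policy \<pi>" and ss: "\<forall>a. p s a s = 1"
  shows "next_var \<pi> p s f = 0"
proof -
  have pe: "p s a y = (if y = s then 1 else 0)" for a y
  proof (cases "y = s")
    case False
    have "1 = (\<Sum>y\<in>UNIV. p s a y)" using p by (simp add: is_transition_def)
    also have "\<dots> = p s a s + (\<Sum>y\<in>UNIV - {s}. p s a y)"
      by (rule sum.remove) auto
    finally have "(\<Sum>y\<in>UNIV - {s}. p s a y) = 0" using ss by simp
    then have "\<forall>y\<in>UNIV - {s}. p s a y = 0"
      using sum_nonneg_eq_0_iff[of "UNIV - {s}" "p s a"] trans_le1(2)[OF p] by auto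
    then show ?thesis using False by auto
  qed (use ss in simp)
  have m: "next_mean \<pi> p s f = f s"
  proof -
    have "(\<Sum>s'\<in>UNIV. \<pi> s a * (if s' = s then 1 else 0) * f s') = \<pi> s a * f s" for a
    proof -
      have "\<pi> s a * (if s' = s then 1 else 0) * f s' = (if s' = s then \<pi> s a * f s else 0)" for s'
        by simp
      then show ?thesis by (simp only:) simp
    qed
    then show ?thesis unfolding next_mean_def pe using pol
      by (simp add: is_policy_def flip: sum_distrib_right)
  qed
  show ?thesis unfolding next_var_def m pe by (intro sum.neutral ballI) auto
qed

locale mdp =
  fixes M :: "'w measure" and P :: "'w \<Rightarrow> 's::finite \<Rightarrow> 'a::finite \<Rightarrow> 's \<Rightarrow> real"
    and r :: "'s \<Rightarrow> 'a \<Rightarrow> real" and \<gamma> :: real and \<pi> :: "'s \<Rightarrow> 'a \<Rightarrow> real"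
  assumes ps: "prob_space M" and g0: "0 \<le> \<gamma>" and g1: "\<gamma> < 1"
    and tr: "\<And>\<omega>. \<omega> \<in> space M \<Longrightarrow> is_transition (P \<omega>)"
    and meas: "\<And>x a y. (\<lambda>\<omega>. P \<omega> x a y) \<in> borel_measurable M"
    and pol: "is_policy \<pi>"
begin

sublocale prob_space M by (rule ps)

definition BM :: "('w \<Rightarrow> real) \<Rightarrow> bool" where
  "BM f \<longleftrightarrow> f \<in> borel_measurable M \<and> (\<exists>B. \<forall>\<omega>\<in>space M. \<bar>f \<omega>\<bar> \<le> B)"

lemma BM_integrable: "BM f \<Longrightarrow> integrable M f"
  unfolding BM_def by (auto intro!: integrable_const_bound AE_I2)

lemma BM_const[intro]: "BM (\<lambda>\<omega>. c)"
  unfolding BM_def by auto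

lemma BM_add[intro]: "BM f \<Longrightarrow> BM g \<Longrightarrow> BM (\<lambda>\<omega>. f \<omega> + g \<omega>)"
  unfolding BM_def
proof (elim conjE exE, intro conjI exI ballI)
  fix B C \<omega> assume "\<forall>\<omega>\<in>space M. \<bar>f \<omega>\<bar> \<le> B" "\<forall>\<omega>\<in>space M. \<bar>g \<omega>\<bar> \<le> C" "\<omega> \<in> space M"
  then show "\<bar>f \<omega> + g \<omega>\<bar> \<le> B + C" by (auto intro: abs_triangle_ineq[THEN order.trans] add_mono)
qed auto

lemma BM_diff[intro]: "BM f \<Longrightarrow> BM g \<Longrightarrow> BM (\<lambda>\<omega>. f \<omega> - g \<omega>)"
  unfolding BM_def
proof (elim conjE exE, intro conjI exI ballI)
  fix B C \<omega> assume "\<forall>\<omega>\<in>space M. \<bar>f \<omega>\<bar> \<le> B" "\<forall>\<omega>\<in>space M. \<bar>g \<omega>\<bar> \<le> C" "\<omega> \<in> space M"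
  then show "\<bar>f \<omega> - g \<omega>\<bar> \<le> B + C" by (auto intro: abs_triangle_ineq4[THEN order.trans] add_mono)
qed auto

lemma BM_mult[intro]: "BM f \<Longrightarrow> BM g \<Longrightarrow> BM (\<lambda>\<omega>. f \<omega> * g \<omega>)"
  unfolding BM_def
proof (elim conjE exE, intro conjI exI ballI)
  fix B C \<omega> assume "\<forall>\<omega>\<in>space M. \<bar>f \<omega>\<bar> \<le> B" "\<forall>\<omega>\<in>space M. \<bar>g \<omega>\<bar> \<le> C" "\<omega> \<in> space M"
  then have "\<bar>f \<omega>\<bar> \<le> B" "\<bar>g \<omega>\<bar> \<le> C" by auto
  then show "\<bar>f \<omega> * g \<omega>\<bar> \<le> B * C" by (simp add: abs_mult mult_mono')
qed auto

lemma BM_pow2[intro]: "BM f \<Longrightarrow> BM (\<lambda>\<omega>. (f \<omega>)\<^sup>2)"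
  unfolding power2_eq_square by (rule BM_mult)

lemma BM_sum[intro]: "(\<And>i. i \<in> I \<Longrightarrow> BM (f i)) \<Longrightarrow> BM (\<lambda>\<omega>. \<Sum>i\<in>I. f i \<omega>)"
proof (induction I rule: infinite_finite_induct)
  case (insert x F)
  then show ?case by (simp add: BM_add)
qed (auto simp: BM_const)

lemma BM_P[intro]: "BM (\<lambda>\<omega>. P \<omega> x a y)"
  unfolding BM_def using meas trans_le1[OF tr] by (intro conjI exI[of _ 1]) auto

lemmas BM_intros = BM_sum BM_mult BM_add BM_diff BM_pow2 BM_P BM_const

definition V where "V \<omega> j = value_fn r \<gamma> \<pi> (P \<omega>) j"
definition Vb where "Vb j = mean_value M P r \<gamma> \<pi> j"

lemma V_meas: "(\<lambda>\<omega>. V \<omega> j) \<in> borel_measurable M"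
proof -
  have "(\<lambda>\<omega>. lim (\<lambda>n. \<Sum>h<n. vterm r \<gamma> \<pi> (P \<omega>) j h)) \<in> borel_measurable M"
    by (rule lim_measurable[OF meas])
  then show ?thesis
    by (rule measurable_cong[THEN iffD1, rotated]) (simp add: V_def value_lim[OF tr pol g0 g1])
qed

lemma BM_V[intro]: "BM (\<lambda>\<omega>. V \<omega> j)"
  unfolding BM_def using V_meas value_bound[OF tr pol g0 g1]
  by (intro conjI exI[of _ "rbound r / (1 - \<gamma>)"]) (auto simp: V_def)

lemmas BM_intros2 = BM_intros BM_V

lemma Vb_eq: "Vb j = (\<integral>\<omega>. V \<omega> j \<partial>M)"
  by (simp add: Vb_def V_def mean_value_def)


lemma int1: "integrable M (\<lambda>\<omega>. P \<omega> x a y)"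
  by (rule BM_integrable) blast

lemma mt_trans: "is_transition (mean_trans M P)"
  unfolding is_transition_def
proof (intro conjI allI)
  fix x a y show "0 \<le> mean_trans M P x a y"
    unfolding mean_trans_def using trans_le1(2)[OF tr] by simp
next
  fix x a
  have "(\<Sum>y\<in>UNIV. mean_trans M P x a y) = (\<integral>\<omega>. (\<Sum>y\<in>UNIV. P \<omega> x a y) \<partial>M)"
    unfolding mean_trans_def by (simp add: Bochner_Integration.integral_sum int1)
  also have "\<dots> = (\<integral>\<omega>. 1 \<partial>M)"
    by (rule Bochner_Integration.integral_cong) (use tr in \<open>auto simp: is_transition_def\<close>)
  finally show "(\<Sum>y\<in>UNIV. mean_trans M P x a y) = 1" by (simp add: prob_space)
qed

lemma identity:
  "u_t M P r \<gamma> \<pi> s = w_t M P r \<gamma> \<pi> s - g_t M P r \<gamma> \<pi> s"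
proof -
  define m where "m \<omega> = (\<Sum>a\<in>UNIV. \<Sum>y\<in>UNIV. \<pi> s a * P \<omega> s a y * Vb y)" for \<omega>
  define S2 where "S2 \<omega> = (\<Sum>a\<in>UNIV. \<Sum>y\<in>UNIV. \<pi> s a * P \<omega> s a y * (Vb y)\<^sup>2)" for \<omega>
  define NV where "NV \<omega> = next_var \<pi> (P \<omega>) s (\<lambda>j. V \<omega> j)" for \<omega>
  have mV: "mean_value M P r \<gamma> \<pi> = Vb" by (simp add: Vb_def fun_eq_iff)
  have Vf: "value_fn r \<gamma> \<pi> (P \<omega>) = (\<lambda>j. V \<omega> j)" for \<omega> by (simp add: V_def fun_eq_iff)
  have BMm: "BM m" unfolding m_def by (intro BM_intros2)
  have BMS2: "BM S2" unfolding S2_def by (intro BM_intros2)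
  have BMNV: "BM NV" unfolding NV_def next_var_def next_mean_def by (intro BM_intros2)
  have "next_var \<pi> (mean_trans M P) s Vb = (\<Sum>a\<in>UNIV. \<Sum>y\<in>UNIV. \<pi> s a * mean_trans M P s a y * (Vb y)\<^sup>2)
      - (next_mean \<pi> (mean_trans M P) s Vb)\<^sup>2"
    by (rule nv_alt[OF pol_trans_sum[OF mt_trans pol]])
  also have "(\<Sum>a\<in>UNIV. \<Sum>y\<in>UNIV. \<pi> s a * mean_trans M P s a y * (Vb y)\<^sup>2) = (\<integral>\<omega>. S2 \<omega> \<partial>M)"
  proof -
    have i1: "integrable M (\<lambda>\<omega>. \<Sum>y\<in>UNIV. \<pi> s a * P \<omega> s a y * (Vb y)\<^sup>2)" for a
      by (intro BM_integrable BM_intros2)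
    have i2: "integrable M (\<lambda>\<omega>. \<pi> s a * P \<omega> s a y * (Vb y)\<^sup>2)" for a y
      by (intro BM_integrable BM_intros2)
    show ?thesis unfolding S2_def mean_trans_def
      apply (subst Bochner_Integration.integral_sum)
      apply (rule i1)
      apply (intro sum.cong refl)
      apply (subst Bochner_Integration.integral_sum)
      apply (rule i2)
      apply simp
      done
  qed
  also have "next_mean \<pi> (mean_trans M P) s Vb = (\<integral>\<omega>. m \<omega> \<partial>M)"
  proof -
    have i1: "integrable M (\<lambda>\<omega>. \<Sum>y\<in>UNIV. \<pi> s a * P \<omega> s a y * Vb y)" for a
      by (intro BM_integrable BM_intros2)
    have i2: "integrable M (\<lambda>\<omega>. \<pi> s a * P \<omega> s a y * Vb y)" for a y
      by (intro BM_integrable BM_intros2)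
    show ?thesis unfolding m_def mean_trans_def next_mean_def
      by (simp add: Bochner_Integration.integral_sum i1, intro sum.cong refl, subst Bochner_Integration.integral_sum, rule i2, simp)
  qed
  finally have U1: "next_var \<pi> (mean_trans M P) s Vb = (\<integral>\<omega>. S2 \<omega> \<partial>M) - (\<integral>\<omega>. m \<omega> \<partial>M)\<^sup>2" .
  have W: "w_t M P r \<gamma> \<pi> s = (\<integral>\<omega>. (m \<omega>)\<^sup>2 \<partial>M) - (\<integral>\<omega>. m \<omega> \<partial>M)\<^sup>2"
    unfolding w_t_def mV m_def[symmetric]
    by (rule variance_eq; intro BM_integrable BM_pow2 BMm)
  have "(\<integral>\<omega>. next_var \<pi> (P \<omega>) s Vb \<partial>M) = (\<integral>\<omega>. S2 \<omega> - (m \<omega>)\<^sup>2 \<partial>M)"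
    by (rule Bochner_Integration.integral_cong[OF refl])
       (simp add: nv_alt[OF pol_trans_sum[OF tr pol]] S2_def m_def next_mean_def)
  also have "\<dots> = (\<integral>\<omega>. S2 \<omega> \<partial>M) - (\<integral>\<omega>. (m \<omega>)\<^sup>2 \<partial>M)"
    by (rule Bochner_Integration.integral_diff; intro BM_integrable BM_pow2 BMm BMS2)
  finally have G2: "(\<integral>\<omega>. next_var \<pi> (P \<omega>) s Vb \<partial>M) = (\<integral>\<omega>. S2 \<omega> \<partial>M) - (\<integral>\<omega>. (m \<omega>)\<^sup>2 \<partial>M)" .
  have G: "g_t M P r \<gamma> \<pi> s = (\<integral>\<omega>. NV \<omega> \<partial>M) - (\<integral>\<omega>. next_var \<pi> (P \<omega>) s Vb \<partial>M)"
    unfolding g_t_def mV Vf NV_def[symmetric]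
    apply (rule Bochner_Integration.integral_diff; rule BM_integrable)
     apply (rule BMNV)
    apply (unfold next_var_def next_mean_def, intro BM_intros2)
    done
  have U: "u_t M P r \<gamma> \<pi> s = next_var \<pi> (mean_trans M P) s Vb - (\<integral>\<omega>. NV \<omega> \<partial>M)"
    unfolding u_t_def mV Vf NV_def ..
  show ?thesis using U U1 W G G2 by simp
qed


lemma indep_core:
  fixes rank :: "'s \<Rightarrow> nat" and f :: "('a \<Rightarrow> 's \<Rightarrow> real) \<Rightarrow> real"
  assumes A1: "indep_transitions M P"
    and RR: "\<forall>\<omega>\<in>space M. \<forall>x a y. P \<omega> x a y \<noteq> 0 \<longrightarrow> rank y < rank x \<or> y = x"
    and zs: "rank z < rank s"
    and f: "f \<in> borel_measurable (Pi\<^sub>M UNIV (\<lambda>_. Pi\<^sub>M UNIV (\<lambda>_. borel)))"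
    and bf: "BM (\<lambda>\<omega>. f (P \<omega> s))"
  shows "(\<integral>\<omega>. f (P \<omega> s) * V \<omega> z \<partial>M) = (\<integral>\<omega>. f (P \<omega> s) \<partial>M) * Vb z"
proof -
  have R: "\<And>\<omega> x a y. \<omega> \<in> space M \<Longrightarrow> P \<omega> x a y \<noteq> 0 \<Longrightarrow> rank y < rank x \<or> y = x"
    using RR by blast
  define M' where "M' = (Pi\<^sub>M UNIV (\<lambda>_::'a. Pi\<^sub>M UNIV (\<lambda>_::'s. borel :: real measure)))"
  have ind0: "indep_vars (\<lambda>_. M') (\<lambda>x \<omega>. P \<omega> x) UNIV"
    using A1 unfolding indep_transitions_def M'_def .
  have ind: "indep_var (Pi\<^sub>M {s} (\<lambda>_. M')) (\<lambda>\<omega>. restrict (\<lambda>i. P \<omega> i) {s})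
      (Pi\<^sub>M (UNIV - {s}) (\<lambda>_. M')) (\<lambda>\<omega>. restrict (\<lambda>i. P \<omega> i) (UNIV - {s}))"
    by (rule indep_var_restrict[OF ind0]) auto
  define Q where "Q = (\<lambda>(a::'a) (y::'s). 0::real)"
  define F2 where "F2 Y = lim (\<lambda>n. \<Sum>h<n. vterm r \<gamma> \<pi> (\<lambda>x. if x = s then Q else Y x) z h)"
    for Y :: "'s \<Rightarrow> 'a \<Rightarrow> 's \<Rightarrow> real"
  have m1: "(\<lambda>Y. f (Y s)) \<in> borel_measurable (Pi\<^sub>M {s} (\<lambda>_. M'))"
  proof (rule measurable_compose[where f="\<lambda>Y. Y s" and g=f and N=M'])
    show "(\<lambda>Y. Y s) \<in> measurable (Pi\<^sub>M {s} (\<lambda>_. M')) M'"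
      by (rule measurable_component_singleton) simp
    show "f \<in> borel_measurable M'" using f unfolding M'_def .
  qed
  have m2: "F2 \<in> borel_measurable (Pi\<^sub>M (UNIV - {s}) (\<lambda>_. M'))"
    unfolding F2_def
  proof (rule lim_measurable)
    fix x a y
    show "(\<lambda>Y. (if x = s then Q else Y x) a y) \<in> borel_measurable (Pi\<^sub>M (UNIV - {s}) (\<lambda>_. M'))"
    proof (cases "x = s")
      case False
      have "(\<lambda>Y. Y x) \<in> measurable (Pi\<^sub>M (UNIV - {s}) (\<lambda>_. M')) M'"
        by (rule measurable_component_singleton) (use False in auto)
      moreover have "(\<lambda>g. g a y) \<in> borel_measurable M'"
        unfolding M'_def
      proof (rule measurable_compose[where f="\<lambda>g. g a" and g="\<lambda>h. h y"])
        show "(\<lambda>g. g a) \<in> measurable (Pi\<^sub>M UNIV (\<lambda>_::'a. Pi\<^sub>M UNIV (\<lambda>_::'s. borel :: real measure))) (Pi\<^sub>M UNIV (\<lambda>_::'s. borel :: real measure))"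
          by (rule measurable_component_singleton) simp
        show "(\<lambda>h. h y) \<in> borel_measurable (Pi\<^sub>M UNIV (\<lambda>_::'s. borel :: real measure))"
          by (rule measurable_component_singleton) simp
      qed
      ultimately show ?thesis using False by (simp add: measurable_compose[of _ _ M'])
    qed simp
  qed
  have ind2: "indep_var borel ((\<lambda>Y. f (Y s)) \<circ> (\<lambda>\<omega>. restrict (\<lambda>i. P \<omega> i) {s}))
      borel (F2 \<circ> (\<lambda>\<omega>. restrict (\<lambda>i. P \<omega> i) (UNIV - {s})))"
    by (rule indep_var_compose[OF ind m1 m2])
  have eq1: "((\<lambda>Y. f (Y s)) \<circ> (\<lambda>\<omega>. restrict (\<lambda>i. P \<omega> i) {s})) = (\<lambda>\<omega>. f (P \<omega> s))"
    by (simp add: fun_eq_iff)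
  have eq2: "(F2 \<circ> (\<lambda>\<omega>. restrict (\<lambda>i. P \<omega> i) (UNIV - {s}))) \<omega> = V \<omega> z" if \<omega>: "\<omega> \<in> space M" for \<omega>
  proof -
    have "(\<lambda>x. if x = s then Q else restrict (\<lambda>i. P \<omega> i) (UNIV - {s}) x) = (P \<omega>)(s := Q)"
      by (auto simp: fun_eq_iff)
    then have "(F2 \<circ> (\<lambda>\<omega>. restrict (\<lambda>i. P \<omega> i) (UNIV - {s}))) \<omega>
        = lim (\<lambda>n. \<Sum>h<n. vterm r \<gamma> \<pi> ((P \<omega>)(s := Q)) z h)"
      by (simp add: F2_def)
    also have "\<dots> = lim (\<lambda>n. \<Sum>h<n. vterm r \<gamma> \<pi> (P \<omega>) z h)"
      using vterm_local[where p="P \<omega>" and rank=rank, OF R[OF \<omega>] zs] by simp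
    also have "\<dots> = V \<omega> z"
      by (simp add: V_def value_lim[OF tr[OF \<omega>] pol g0 g1])
    finally show ?thesis .
  qed
  let ?X2 = "F2 \<circ> (\<lambda>\<omega>. restrict (\<lambda>i. P \<omega> i) (UNIV - {s}))"
  have i2: "integrable M ?X2"
  proof (subst Bochner_Integration.integrable_cong[OF refl])
    show "?X2 \<omega> = V \<omega> z" if "\<omega> \<in> space M" for \<omega> using eq2[OF that] .
    show "integrable M (\<lambda>\<omega>. V \<omega> z)" using BM_integrable[OF BM_V[of z]] .
  qed
  have i1: "integrable M (\<lambda>\<omega>. f (P \<omega> s))" by (rule BM_integrable[OF bf])
  have "(\<integral>\<omega>. f (P \<omega> s) * V \<omega> z \<partial>M) = (\<integral>\<omega>. f (P \<omega> s) * ?X2 \<omega> \<partial>M)"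
    by (rule Bochner_Integration.integral_cong) (auto simp: eq2[unfolded o_def])
  also have "\<dots> = (\<integral>\<omega>. f (P \<omega> s) \<partial>M) * (\<integral>\<omega>. ?X2 \<omega> \<partial>M)"
    using indep_var_lebesgue_integral[OF ind2[unfolded eq1] i1 i2] .
  also have "(\<integral>\<omega>. ?X2 \<omega> \<partial>M) = Vb z"
    unfolding Vb_eq by (rule Bochner_Integration.integral_cong) (auto simp: eq2[unfolded o_def])
  finally show ?thesis .
qed


lemma nv_decomp:
  assumes "(\<Sum>a\<in>UNIV. \<Sum>y\<in>UNIV. \<pi> s a * q s a y) = 1"
  shows "next_var \<pi> q s (\<lambda>y. F y + D y) - next_var \<pi> q s F = next_var \<pi> q s D
    + 2 * ((\<Sum>a\<in>UNIV. \<Sum>y\<in>UNIV. \<pi> s a * F y * (q s a y * D y))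
         - (\<Sum>a\<in>UNIV. \<Sum>y\<in>UNIV. \<Sum>b\<in>UNIV. \<Sum>z\<in>UNIV. (\<pi> s a * F y * \<pi> s b) * (q s a y * q s b z * D z)))"
proof -
  define A where "A = (\<Sum>a\<in>UNIV. \<Sum>y\<in>UNIV. \<pi> s a * q s a y * (F y)\<^sup>2)"
  define E where "E = (\<Sum>a\<in>UNIV. \<Sum>y\<in>UNIV. \<pi> s a * q s a y * (D y)\<^sup>2)"
  define Fd where "Fd = (\<Sum>a\<in>UNIV. \<Sum>y\<in>UNIV. \<pi> s a * F y * (q s a y * D y))"
  define B where "B = next_mean \<pi> q s F"
  define C where "C = next_mean \<pi> q s D"
  have 1: "(\<Sum>a\<in>UNIV. \<Sum>y\<in>UNIV. \<pi> s a * q s a y * (F y + D y)\<^sup>2) = A + 2 * Fd + E"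
    unfolding A_def E_def Fd_def
    by (simp add: power2_sum algebra_simps sum.distrib sum_distrib_left)
  have 2: "next_mean \<pi> q s (\<lambda>y. F y + D y) = B + C"
    unfolding B_def C_def next_mean_def by (simp add: algebra_simps sum.distrib)
  have 3: "(\<Sum>a\<in>UNIV. \<Sum>y\<in>UNIV. \<Sum>b\<in>UNIV. \<Sum>z\<in>UNIV. (\<pi> s a * F y * \<pi> s b) * (q s a y * q s b z * D z)) = B * C"
    unfolding B_def C_def next_mean_def
    by (simp add: sum_distrib_left sum_distrib_right mult_ac, rule sum.cong[OF refl], rule sum.swap)
  show ?thesis
    unfolding nv_alt[where \<pi>=\<pi> and q=q and s=s, OF assms] 1 2 3 Fd_def[symmetric] A_def[symmetric] E_def[symmetric] B_def[symmetric] C_def[symmetric]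
    by (simp add: power2_sum algebra_simps)
qed


definition D where "D \<omega> y = V \<omega> y - Vb y"

lemma BM_D[intro]: "BM (\<lambda>\<omega>. D \<omega> y)"
  unfolding D_def by (intro BM_intros2)

lemmas BM_intros3 = BM_intros2 BM_D

lemma int_sum_zero:
  assumes "\<And>i. i \<in> I \<Longrightarrow> BM (f i)" "\<And>i. i \<in> I \<Longrightarrow> (\<integral>\<omega>. f i \<omega> \<partial>M) = 0"
  shows "(\<integral>\<omega>. (\<Sum>i\<in>I. f i \<omega>) \<partial>M) = 0"
  using assms by (simp add: Bochner_Integration.integral_sum BM_integrable)

lemma int_cmult_zero:
  fixes f :: "'w \<Rightarrow> real"
  assumes "(\<integral>\<omega>. f \<omega> \<partial>M) = 0"
  shows "(\<integral>\<omega>. c * f \<omega> \<partial>M) = 0"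
  using assms by simp

lemma D_zero:
  fixes rank :: "'s \<Rightarrow> nat" and f :: "('a \<Rightarrow> 's \<Rightarrow> real) \<Rightarrow> real"
  assumes A1: "indep_transitions M P"
    and RR: "\<forall>\<omega>\<in>space M. \<forall>x a y. P \<omega> x a y \<noteq> 0 \<longrightarrow> rank y < rank x \<or> y = x"
    and f: "f \<in> borel_measurable (Pi\<^sub>M UNIV (\<lambda>_. Pi\<^sub>M UNIV (\<lambda>_. borel)))"
    and bf: "BM (\<lambda>\<omega>. f (P \<omega> s))"
    and zs: "rank z < rank s \<or> (\<forall>\<omega>\<in>space M. f (P \<omega> s) = 0)"
  shows "(\<integral>\<omega>. f (P \<omega> s) * D \<omega> z \<partial>M) = 0"
proof (cases "rank z < rank s")
  case True
  have "(\<integral>\<omega>. f (P \<omega> s) * D \<omega> z \<partial>M) = (\<integral>\<omega>. f (P \<omega> s) * V \<omega> z - f (P \<omega> s) * Vb z \<partial>M)"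
    by (simp add: D_def algebra_simps)
  also have "\<dots> = (\<integral>\<omega>. f (P \<omega> s) * V \<omega> z \<partial>M) - (\<integral>\<omega>. f (P \<omega> s) * Vb z \<partial>M)"
    by (rule Bochner_Integration.integral_diff; intro BM_integrable BM_mult bf BM_V BM_const)
  also have "\<dots> = 0"
    using indep_core[OF A1 RR True f bf] by simp
  finally show ?thesis .
next
  case False
  then have "\<forall>\<omega>\<in>space M. f (P \<omega> s) = 0" using zs by auto
  then have "(\<integral>\<omega>. f (P \<omega> s) * D \<omega> z \<partial>M) = (\<integral>\<omega>. 0 \<partial>M)"
    by (intro Bochner_Integration.integral_cong) auto
  then show ?thesis by simp
qed

lemma g_nonneg_nonterm:
  fixes rank :: "'s \<Rightarrow> nat"
  assumes A1: "indep_transitions M P"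
    and RR: "\<forall>\<omega>\<in>space M. \<forall>x a y. P \<omega> x a y \<noteq> 0 \<longrightarrow> rank y < rank x \<or> y = x"
    and Rs: "\<And>\<omega> b z. \<omega> \<in> space M \<Longrightarrow> P \<omega> s b z \<noteq> 0 \<Longrightarrow> rank z < rank s"
  shows "0 \<le> g_t M P r \<gamma> \<pi> s"
proof -
  have zero: "rank z < rank s \<or> (\<forall>\<omega>\<in>space M. P \<omega> s b z = 0)" for b z
    using Rs by blast
  have E1: "(\<integral>\<omega>. P \<omega> s a y * D \<omega> y \<partial>M) = 0" for a y
  proof -
    have "(\<integral>\<omega>. (\<lambda>row. row a y) (P \<omega> s) * D \<omega> y \<partial>M) = 0"
      by (rule D_zero[where rank=rank and f="\<lambda>row. row a y" and z=y, OF A1 RR]) (intro borel_measurable_times meas_row, intro BM_intros3, use zero in auto)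
    then show ?thesis by simp
  qed
  have E2: "(\<integral>\<omega>. P \<omega> s a y * P \<omega> s b z * D \<omega> z \<partial>M) = 0" for a y b z
  proof -
    have "(\<integral>\<omega>. (\<lambda>row. row a y * row b z) (P \<omega> s) * D \<omega> z \<partial>M) = 0"
      by (rule D_zero[where rank=rank and f="\<lambda>row. row a y * row b z" and z=z, OF A1 RR]) (intro borel_measurable_times meas_row, intro BM_intros3, use zero in auto)
    then show ?thesis by simp
  qed
  define T1 where "T1 \<omega> = (\<Sum>a\<in>UNIV. \<Sum>y\<in>UNIV. \<pi> s a * Vb y * (P \<omega> s a y * D \<omega> y))" for \<omega>
  define T2 where "T2 \<omega> = (\<Sum>a\<in>UNIV. \<Sum>y\<in>UNIV. \<Sum>b\<in>UNIV. \<Sum>z\<in>UNIV.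
      (\<pi> s a * Vb y * \<pi> s b) * (P \<omega> s a y * P \<omega> s b z * D \<omega> z))" for \<omega>
  define ND where "ND \<omega> = next_var \<pi> (P \<omega>) s (D \<omega>)" for \<omega>
  have BT1: "BM T1" unfolding T1_def by (intro BM_intros3)
  have BT2: "BM T2" unfolding T2_def by (intro BM_intros3)
  have BND: "BM ND" unfolding ND_def next_var_def next_mean_def by (intro BM_intros3)
  have IT1: "(\<integral>\<omega>. T1 \<omega> \<partial>M) = 0"
    unfolding T1_def by (intro int_sum_zero int_cmult_zero BM_intros3 E1)
  have IT2: "(\<integral>\<omega>. T2 \<omega> \<partial>M) = 0"
    unfolding T2_def by (intro int_sum_zero int_cmult_zero BM_intros3 E2)
  have mV: "mean_value M P r \<gamma> \<pi> = Vb" by (simp add: Vb_def fun_eq_iff)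
  have "g_t M P r \<gamma> \<pi> s = (\<integral>\<omega>. ND \<omega> + 2 * (T1 \<omega> - T2 \<omega>) \<partial>M)"
    unfolding g_t_def mV
  proof (rule Bochner_Integration.integral_cong[OF refl])
    fix \<omega> assume \<omega>: "\<omega> \<in> space M"
    have "value_fn r \<gamma> \<pi> (P \<omega>) = (\<lambda>y. Vb y + D \<omega> y)" by (simp add: fun_eq_iff D_def V_def)
    then show "next_var \<pi> (P \<omega>) s (value_fn r \<gamma> \<pi> (P \<omega>)) - next_var \<pi> (P \<omega>) s Vb
        = ND \<omega> + 2 * (T1 \<omega> - T2 \<omega>)"
      unfolding ND_def T1_def T2_def
      apply (simp only:)
      using nv_decomp[where q="P \<omega>" and s=s and F=Vb and D="D \<omega>", OF pol_trans_sum[OF tr[OF \<omega>] pol]]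
      by simp
  qed
  also have "\<dots> = (\<integral>\<omega>. ND \<omega> \<partial>M) + 2 * ((\<integral>\<omega>. T1 \<omega> \<partial>M) - (\<integral>\<omega>. T2 \<omega> \<partial>M))"
    using BT1 BT2 BND by (simp add: BM_integrable)
  also have "\<dots> = (\<integral>\<omega>. ND \<omega> \<partial>M)" using IT1 IT2 by simp
  finally have geq: "g_t M P r \<gamma> \<pi> s = (\<integral>\<omega>. ND \<omega> \<partial>M)" .
  have "0 \<le> (\<integral>\<omega>. ND \<omega> \<partial>M)"
  proof (rule Bochner_Integration.integral_nonneg)
    fix \<omega> assume "\<omega> \<in> space M"
    then show "0 \<le> ND \<omega>"
      unfolding ND_def next_var_def using trans_le1(2)[OF tr] pol_le1(2)[OF pol]
      by (intro sum_nonneg mult_nonneg_nonneg) auto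
  qed
  then show ?thesis using geq by simp
qed


lemma g_term:
  assumes "terminal_state M P s"
  shows "g_t M P r \<gamma> \<pi> s = 0"
proof -
  have "g_t M P r \<gamma> \<pi> s = (\<integral>\<omega>. 0 \<partial>M)"
    unfolding g_t_def
  proof (rule Bochner_Integration.integral_cong[OF refl])
    fix \<omega> assume \<omega>: "\<omega> \<in> space M"
    have ss: "\<forall>a. P \<omega> s a s = 1" using assms \<omega> by (simp add: terminal_state_def)
    show "next_var \<pi> (P \<omega>) s (value_fn r \<gamma> \<pi> (P \<omega>)) - next_var \<pi> (P \<omega>) s (mean_value M P r \<gamma> \<pi>) = 0"
      using nv_terminal[OF tr[OF \<omega>] pol ss] by simp
  qed
  then show ?thesis by simp
qed



end

theorem theorem2:
  fixes M :: "'w measure"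
    and P :: "'w \<Rightarrow> 's::finite \<Rightarrow> 'a::finite \<Rightarrow> 's \<Rightarrow> real"
    and r :: "'s \<Rightarrow> 'a \<Rightarrow> real"
    and \<gamma> :: real
    and \<pi> :: "'s \<Rightarrow> 'a \<Rightarrow> real"
    and s :: 's
  assumes "prob_space M"
    and "0 \<le> \<gamma>" and "\<gamma> < 1"
    and "\<And>\<omega>. \<omega> \<in> space M \<Longrightarrow> is_transition (P \<omega>)"
    and "\<And>x a y. (\<lambda>\<omega>. P \<omega> x a y) \<in> borel_measurable M"
    and "is_policy \<pi>"
    and A1: "indep_transitions M P"
    and A2: "acyclic_mdp M P"
  shows "u_t M P r \<gamma> \<pi> s = w_t M P r \<gamma> \<pi> s - g_t M P r \<gamma> \<pi> s
     \<and> g_t M P r \<gamma> \<pi> s \<ge> 0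
     \<and> u_t M P r \<gamma> \<pi> s \<le> w_t M P r \<gamma> \<pi> s"
proof -
  interpret mdp M P r \<gamma> \<pi>
    by (rule mdp.intro) (use assms in auto)
  from A2 obtain rank :: "'s \<Rightarrow> nat" where RR0: "\<forall>\<omega>\<in>space M. \<forall>s a s'.
      P \<omega> s a s' \<noteq> 0 \<longrightarrow> rank s' < rank s \<or> (s' = s \<and> terminal_state M P s)"
    unfolding acyclic_mdp_def by blast
  have RR: "\<forall>\<omega>\<in>space M. \<forall>x a y. P \<omega> x a y \<noteq> 0 \<longrightarrow> rank y < rank x \<or> y = x"
    using RR0 by blast
  have g: "0 \<le> g_t M P r \<gamma> \<pi> s"
  proof (cases "terminal_state M P s")
    case True
    then show ?thesis by (simp add: g_term)
  next
    case False
    have Rs: "rank z < rank s" if "\<omega> \<in> space M" "P \<omega> s b z \<noteq> 0" for \<omega> b z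
      using RR0 that False by blast
    have R: "\<And>\<omega> x a y. \<omega> \<in> space M \<Longrightarrow> P \<omega> x a y \<noteq> 0 \<Longrightarrow> rank y < rank x \<or> y = x"
      using RR by blast
    show ?thesis
      by (rule g_nonneg_nonterm[where rank=rank]) (use A1 RR Rs in auto)
  qed
  show ?thesis using identity[of s] g by simp
qed


end
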